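(* Let $G=(V,E,C,\ell)$ be an edge-labeled hypergraph with maximum hyperedge size $r$. Let $Y_{\mathrm{MV}}$ be a majority-vote clustering: for each node $u$, $Y_{\mathrm{MV}}[u]$ is a category $c$ maximizing the number of hyperedges $e\ni u$ with $\ell(e)=c$ (ties broken arbitrarily). Then $\mathrm{CatEdgeClus}(Y_{\mathrm{MV}})\le r\cdot\min_{Y:V\to C}\mathrm{CatEdgeClus}(Y)$.
   Context: An edge-labeled hypergraph $G=(V,E,C,\ell)$ consists of a finite node set $V$, a finite collection $E$ of hyperedges (nonempty subsets of $V$), a finite set $C$ of categories, and a labeling $\ell:E\to C$; $r=\max_{e\in E}|e|$. A clustering is a map $Y:V\to C$. For $e\in E$, $m_Y(e)=1$ if $Y[i]\neq\ell(e)$ for some $i\in e$, and $m_Y(e)=0$ otherwise; $\mathrm{CatEdgeClus}(Y)=\sum_{e\in E}m_Y(e)$. *)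

theory Defs
  imports Main
begin

text \<open>Edge-labeled hypergraph: node set V, hyperedges indexed by a finite set E of
  edge identifiers (so E may be a multiset of node sets), each with node set
  verts e and label lab e in category set C.\<close>

definition edge_labeled_hypergraph ::
  "'v set \<Rightarrow> 'e set \<Rightarrow> ('e \<Rightarrow> 'v set) \<Rightarrow> 'c set \<Rightarrow> ('e \<Rightarrow> 'c) \<Rightarrow> bool" where
  "edge_labeled_hypergraph V E verts C lab \<longleftrightarrow>
     finite V \<and> finite E \<and> finite C \<and>
     (\<forall>e\<in>E. verts e \<noteq> {} \<and> verts e \<subseteq> V \<and> lab e \<in> C)"

definition max_edge_size :: "'e set \<Rightarrow> ('e \<Rightarrow> 'v set) \<Rightarrow> nat" where
  "max_edge_size E verts = Max ((\<lambda>e. card (verts e)) ` E)"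

definition is_clustering :: "'v set \<Rightarrow> 'c set \<Rightarrow> ('v \<Rightarrow> 'c) \<Rightarrow> bool" where
  "is_clustering V C Y \<longleftrightarrow> (\<forall>v\<in>V. Y v \<in> C)"

definition mistake :: "('e \<Rightarrow> 'v set) \<Rightarrow> ('e \<Rightarrow> 'c) \<Rightarrow> ('v \<Rightarrow> 'c) \<Rightarrow> 'e \<Rightarrow> nat" where
  "mistake verts lab Y e = (if \<exists>i\<in>verts e. Y i \<noteq> lab e then 1 else 0)"

definition CatEdgeClus :: "'e set \<Rightarrow> ('e \<Rightarrow> 'v set) \<Rightarrow> ('e \<Rightarrow> 'c) \<Rightarrow> ('v \<Rightarrow> 'c) \<Rightarrow> nat" where
  "CatEdgeClus E verts lab Y = (\<Sum>e\<in>E. mistake verts lab Y e)"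

definition label_degree :: "'e set \<Rightarrow> ('e \<Rightarrow> 'v set) \<Rightarrow> ('e \<Rightarrow> 'c) \<Rightarrow> 'v \<Rightarrow> 'c \<Rightarrow> nat" where
  "label_degree E verts lab u c = card {e\<in>E. u \<in> verts e \<and> lab e = c}"

definition majority_vote :: "'v set \<Rightarrow> 'e set \<Rightarrow> ('e \<Rightarrow> 'v set) \<Rightarrow> 'c set \<Rightarrow> ('e \<Rightarrow> 'c) \<Rightarrow> ('v \<Rightarrow> 'c) \<Rightarrow> bool" where
  "majority_vote V E verts C lab Y \<longleftrightarrow> is_clustering V C Y \<and>
     (\<forall>u\<in>V. \<forall>c\<in>C. label_degree E verts lab u c \<le> label_degree E verts lab u (Y u))"

end

theory Submission
  imports Defs
begin

lemma card_ind: "finite A \<Longrightarrow> card {x\<in>A. P x} = (\<Sum>x\<in>A. if P x then 1 else (0::nat))"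
  by (simp add: sum.If_cases Int_def)

lemma key:
  fixes V :: "'v set" and E :: "'e set" and verts :: "'e \<Rightarrow> 'v set"
    and C :: "'c set" and lab :: "'e \<Rightarrow> 'c" and Ymv :: "'v \<Rightarrow> 'c"
  assumes H: "edge_labeled_hypergraph V E verts C lab"
    and MV: "majority_vote V E verts C lab Ymv"
    and YC: "is_clustering V C Y"
  shows "CatEdgeClus E verts lab Ymv \<le> max_edge_size E verts * CatEdgeClus E verts lab Y"
proof -
  define r where "r = max_edge_size E verts"
  have fV: "finite V" and fE: "finite E" and ev: "\<And>e. e \<in> E \<Longrightarrow> verts e \<noteq> {} \<and> verts e \<subseteq> V"
    using H unfolding edge_labeled_hypergraph_def by auto
  have fv: "\<And>e. e \<in> E \<Longrightarrow> finite (verts e)" using ev fV finite_subset by blast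
  have rge: "\<And>e. e \<in> E \<Longrightarrow> card (verts e) \<le> r"
    unfolding r_def max_edge_size_def using fE by (intro Max_ge) auto
  define mv where "mv e = (\<exists>i\<in>verts e. Ymv i \<noteq> lab e)" for e
  define my where "my e = (\<exists>i\<in>verts e. Y i \<noteq> lab e)" for e
  define Q where "Q u e = (u \<in> verts e \<and> lab e = Ymv u \<and> Ymv u \<noteq> Y u)" for u e
  define D where "D = {e\<in>E. mv e \<and> \<not> my e}"
  have "D \<subseteq> (\<Union>u\<in>V. {e\<in>E. u \<in> verts e \<and> lab e = Y u \<and> Ymv u \<noteq> Y u})"
  proof
    fix e assume "e \<in> D"
    then obtain i where "e \<in> E" "i \<in> verts e" "Ymv i \<noteq> lab e" "Y i = lab e"
      unfolding D_def mv_def my_def by auto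
    then show "e \<in> (\<Union>u\<in>V. {e\<in>E. u \<in> verts e \<and> lab e = Y u \<and> Ymv u \<noteq> Y u})"
      using ev[of e] by (intro UN_I[of i]) auto
  qed
  then have "card D \<le> card (\<Union>u\<in>V. {e\<in>E. u \<in> verts e \<and> lab e = Y u \<and> Ymv u \<noteq> Y u})"
    using fE by (intro card_mono) (auto intro: finite_subset[of _ E])
  also have "\<dots> \<le> (\<Sum>u\<in>V. card {e\<in>E. u \<in> verts e \<and> lab e = Y u \<and> Ymv u \<noteq> Y u})"
    using fV by (rule card_UN_le)
  also have "\<dots> \<le> (\<Sum>u\<in>V. card {e\<in>E. Q u e})"
  proof (rule sum_mono)
    fix u assume uV: "u \<in> V"
    show "card {e\<in>E. u \<in> verts e \<and> lab e = Y u \<and> Ymv u \<noteq> Y u} \<le> card {e\<in>E. Q u e}"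
    proof (cases "Ymv u = Y u")
      case True then show ?thesis by simp
    next
      case False
      have "card {e\<in>E. u \<in> verts e \<and> lab e = Y u \<and> Ymv u \<noteq> Y u} = label_degree E verts lab u (Y u)"
        unfolding label_degree_def using False by (intro arg_cong[where f=card]) auto
      also have "\<dots> \<le> label_degree E verts lab u (Ymv u)"
        using MV YC uV unfolding majority_vote_def is_clustering_def by auto
      also have "\<dots> = card {e\<in>E. Q u e}"
        unfolding label_degree_def Q_def using False by (intro arg_cong[where f=card]) auto
      finally show ?thesis .
    qed
  qed
  also have "\<dots> = (\<Sum>e\<in>E. card {u\<in>V. Q u e})"
    using fV fE by (simp only: card_ind) (rule sum.swap)
  finally have cD: "card D \<le> (\<Sum>e\<in>E. card {u\<in>V. Q u e})" .
  have "CatEdgeClus E verts lab Ymv = (\<Sum>e\<in>E. if mv e then 1 else 0)"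
    unfolding CatEdgeClus_def mistake_def mv_def by simp
  also have "\<dots> = (\<Sum>e\<in>E. (if mv e \<and> my e then 1 else 0) + (if mv e \<and> \<not> my e then 1 else 0))"
    by (intro sum.cong) auto
  also have "\<dots> = (\<Sum>e\<in>E. (if mv e \<and> my e then 1 else 0)) + card D"
    unfolding D_def using fE by (simp add: sum.distrib card_ind)
  also have "\<dots> \<le> (\<Sum>e\<in>E. (if mv e \<and> my e then 1 else 0) + card {u\<in>V. Q u e})"
    using cD by (simp add: sum.distrib)
  also have "\<dots> \<le> (\<Sum>e\<in>E. r * (if my e then 1 else 0))"
  proof (rule sum_mono)
    fix e assume eE: "e \<in> E"
    have sub: "{u\<in>V. Q u e} \<subseteq> verts e" unfolding Q_def by auto
    show "(if mv e \<and> my e then 1 else 0) + card {u\<in>V. Q u e} \<le> r * (if my e then 1 else 0)"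
    proof (cases "my e")
      case False
      then have "{u\<in>V. Q u e} = {}" unfolding Q_def my_def by auto
      then have "card {u\<in>V. Q u e} = 0" by (metis card.empty)
      then show ?thesis using False by simp
    next
      case True
      show ?thesis
      proof (cases "mv e")
        case False
        have "card {u\<in>V. Q u e} \<le> card (verts e)" using sub fv[OF eE] by (rule card_mono[rotated])
        then show ?thesis using False True rge[OF eE] by simp
      next
        case mvT: True
        then obtain i where i: "i \<in> verts e" "Ymv i \<noteq> lab e" unfolding mv_def by auto
        have "{u\<in>V. Q u e} \<subseteq> verts e - {i}" using sub i unfolding Q_def by auto
        then have "card {u\<in>V. Q u e} \<le> card (verts e - {i})" using fv[OF eE] by (intro card_mono) auto
        also have "\<dots> = card (verts e) - 1" using i fv[OF eE] by simp
        finally have c1: "card {u\<in>V. Q u e} \<le> card (verts e) - 1" .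
        have c2: "card (verts e) \<ge> 1"
          using i(1) fv[OF eE] by (metis One_nat_def Suc_leI card_gt_0_iff empty_iff)
        show ?thesis using True mvT rge[OF eE] c1 c2 by simp
      qed
    qed
  qed
  also have "\<dots> = r * CatEdgeClus E verts lab Y"
    unfolding CatEdgeClus_def mistake_def my_def by (simp add: sum_distrib_left)
  finally show ?thesis unfolding r_def .
qed

theorem mainTheorem9:
  fixes V :: "'v set" and E :: "'e set" and verts :: "'e \<Rightarrow> 'v set"
    and C :: "'c set" and lab :: "'e \<Rightarrow> 'c" and Ymv :: "'v \<Rightarrow> 'c"
  assumes "edge_labeled_hypergraph V E verts C lab"
    and "majority_vote V E verts C lab Ymv"
  shows "CatEdgeClus E verts lab Ymv \<le>
           max_edge_size E verts * Min {CatEdgeClus E verts lab Y | Y. is_clustering V C Y}"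
proof -
  let ?S = "{CatEdgeClus E verts lab Y | Y. is_clustering V C Y}"
  have fE: "finite E" using assms(1) unfolding edge_labeled_hypergraph_def by auto
  have "\<And>Y. CatEdgeClus E verts lab Y \<le> card E"
  proof -
    fix Y
    have "(\<Sum>e\<in>E. mistake verts lab Y e) \<le> (\<Sum>e\<in>E. 1)"
      by (rule sum_mono) (simp add: mistake_def)
    then show "CatEdgeClus E verts lab Y \<le> card E" unfolding CatEdgeClus_def by simp
  qed
  then have "?S \<subseteq> {..card E}" by auto
  then have fS: "finite ?S" using finite_subset by blast
  have "is_clustering V C Ymv" using assms(2) unfolding majority_vote_def by auto
  then have "?S \<noteq> {}" by auto
  then have "Min ?S \<in> ?S" using fS by (rule Min_in[rotated])
  then obtain Y where "is_clustering V C Y" "Min ?S = CatEdgeClus E verts lab Y" by auto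
  then show ?thesis using key[OF assms] by simp
qed

end
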